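(* Let $A$ be a $\star$-hypercentral T-brace whose additive group $(A,+)$ is not periodic, and let $T$ be the torsion subgroup of $(A,+)$. Then $T$ is an ideal of $A$ and the quotient brace $A/T$ is abelian.
   Context: A (left) brace is a set $A$ with two operations $+$ and $\cdot$ such that $(A,+)$ is an abelian group, $(A,\cdot)$ is a group, and $a(b+c)=ab+ac-a$ for all $a,b,c\in A$. Put $a\star b=ab-a-b$. A subbrace is a subset which is a subgroup of both $(A,+)$ and $(A,\cdot)$; a subbrace $L$ is an ideal if $a\star z, z\star a\in L$ for all $a\in A$, $z\in L$, and then the quotient brace $A/L$ is defined. A brace is abelian if $a\star b=0$ for all $a,b$. $A$ is a T-brace if whenever $I$ is an ideal of $J$ and $J$ is an ideal of $A$, then $I$ is an ideal of $A$. The $\star$-center is $\zeta(\star,A)=\{a\in A: a\star x=x\star a=0 \ \forall x\in A\}$. The upper $\star$-central series: $\zeta_0(\star,A)=0$, $\zeta_{\alpha+1}(\star,A)/\zeta_\alpha(\star,A)=\zeta(\star,A/\zeta_\alpha(\star,A))$, unions at limit ordinals; its last term is $\zeta_\infty(\star,A)$. $A$ is $\star$-hypercentral if $A=\zeta_\infty(\star,A)$. *)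

theory Defs
  imports "HOL-Algebra.Group"
begin

record 'a brace_struct =
  bcar :: "'a set"
  badd :: "'a \<Rightarrow> 'a \<Rightarrow> 'a"
  bzero :: 'a
  bmul :: "'a \<Rightarrow> 'a \<Rightarrow> 'a"
  bone :: 'a

definition addgrp :: "('a, 'b) brace_struct_scheme \<Rightarrow> 'a monoid" where
  "addgrp B = \<lparr>carrier = bcar B, mult = badd B, one = bzero B\<rparr>"

definition mulgrp :: "('a, 'b) brace_struct_scheme \<Rightarrow> 'a monoid" where
  "mulgrp B = \<lparr>carrier = bcar B, mult = bmul B, one = bone B\<rparr>"

definition bneg :: "('a, 'b) brace_struct_scheme \<Rightarrow> 'a \<Rightarrow> 'a" where
  "bneg B a = inv\<^bsub>addgrp B\<^esub> a"

definition bsub :: "('a, 'b) brace_struct_scheme \<Rightarrow> 'a \<Rightarrow> 'a \<Rightarrow> 'a" where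
  "bsub B a b = badd B a (bneg B b)"

definition brace :: "('a, 'b) brace_struct_scheme \<Rightarrow> bool" where
  "brace B \<longleftrightarrow> comm_group (addgrp B) \<and> group (mulgrp B) \<and>
     (\<forall>a\<in>bcar B. \<forall>b\<in>bcar B. \<forall>c\<in>bcar B.
        bmul B a (badd B b c) = bsub B (badd B (bmul B a b) (bmul B a c)) a)"

definition bstar :: "('a, 'b) brace_struct_scheme \<Rightarrow> 'a \<Rightarrow> 'a \<Rightarrow> 'a" where
  "bstar B a b = bsub B (bsub B (bmul B a b) a) b"

definition subbrace :: "'a set \<Rightarrow> ('a, 'b) brace_struct_scheme \<Rightarrow> bool" where
  "subbrace L B \<longleftrightarrow> subgroup L (addgrp B) \<and> subgroup L (mulgrp B)"

definition brace_ideal :: "'a set \<Rightarrow> ('a, 'b) brace_struct_scheme \<Rightarrow> bool" where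
  "brace_ideal L B \<longleftrightarrow> subbrace L B \<and>
     (\<forall>a\<in>bcar B. \<forall>z\<in>L. bstar B a z \<in> L \<and> bstar B z a \<in> L)"

definition sub_brace :: "('a, 'b) brace_struct_scheme \<Rightarrow> 'a set \<Rightarrow> ('a, 'b) brace_struct_scheme" where
  "sub_brace B J = B\<lparr>bcar := J\<rparr>"

definition T_brace :: "('a, 'b) brace_struct_scheme \<Rightarrow> bool" where
  "T_brace B \<longleftrightarrow> (\<forall>I J. brace_ideal J B \<and> brace_ideal I (sub_brace B J) \<longrightarrow> brace_ideal I B)"

definition bcoset :: "('a, 'b) brace_struct_scheme \<Rightarrow> 'a set \<Rightarrow> 'a \<Rightarrow> 'a set" where
  "bcoset B L a = {badd B a l | l. l \<in> L}"

definition quot_brace :: "('a, 'b) brace_struct_scheme \<Rightarrow> 'a set \<Rightarrow> 'a set brace_struct" where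
  "quot_brace B L =
     \<lparr>bcar = bcoset B L ` bcar B,
      badd = (\<lambda>X Y. bcoset B L (badd B (SOME x. x \<in> X) (SOME y. y \<in> Y))),
      bzero = bcoset B L (bzero B),
      bmul = (\<lambda>X Y. bcoset B L (bmul B (SOME x. x \<in> X) (SOME y. y \<in> Y))),
      bone = bcoset B L (bone B)\<rparr>"

definition abelian_brace :: "('a, 'b) brace_struct_scheme \<Rightarrow> bool" where
  "abelian_brace B \<longleftrightarrow> (\<forall>a\<in>bcar B. \<forall>b\<in>bcar B. bstar B a b = bzero B)"

definition torsion :: "('a, 'b) brace_struct_scheme \<Rightarrow> 'a set" where
  "torsion B = {a \<in> bcar B. \<exists>n::nat. n > 0 \<and> a [^]\<^bsub>addgrp B\<^esub> n = bzero B}"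

definition add_periodic :: "('a, 'b) brace_struct_scheme \<Rightarrow> bool" where
  "add_periodic B \<longleftrightarrow> torsion B = bcar B"

text \<open>Last term \<zeta>_\<infinity>(\<star>,A) of the upper \<star>-central series.  The series is the
transfinite iteration (unions at limits) of S \<mapsto> preimage of \<zeta>(\<star>,A/S), i.e.
S \<mapsto> {a. \<forall>x. a\<star>x \<in> S \<and> x\<star>a \<in> S}, starting from 0; its final term is the
least set closed under this step, defined inductively below.\<close>
inductive_set zeta_inf :: "('a, 'b) brace_struct_scheme \<Rightarrow> 'a set" for B where
  zero: "bzero B \<in> zeta_inf B"
| step: "\<lbrakk>a \<in> bcar B; \<forall>x\<in>bcar B. bstar B a x \<in> zeta_inf B \<and> bstar B x a \<in> zeta_inf B\<rbrakk>
          \<Longrightarrow> a \<in> zeta_inf B"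

definition star_hypercentral :: "('a, 'b) brace_struct_scheme \<Rightarrow> bool" where
  "star_hypercentral B \<longleftrightarrow> bcar B = zeta_inf B"

end

theory Submission
  imports Defs
begin

lemma addgrp_simps[simp]: "carrier (addgrp B) = bcar B" "mult (addgrp B) = badd B" "one (addgrp B) = bzero B"
  by (simp_all add: addgrp_def)
lemma mulgrp_simps[simp]: "carrier (mulgrp B) = bcar B" "mult (mulgrp B) = bmul B" "one (mulgrp B) = bone B"
  by (simp_all add: mulgrp_def)

locale brace_ctx =
  fixes B :: "('a,'b) brace_struct_scheme"
  assumes br: "brace B"
begin

abbreviation "A \<equiv> bcar B"
abbreviation ad (infixl "\<oplus>" 65) where "x \<oplus> y \<equiv> badd B x y"
abbreviation mu (infixl "\<odot>" 70) where "x \<odot> y \<equiv> bmul B x y"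
abbreviation zr ("\<zero>") where "\<zero> \<equiv> bzero B"
abbreviation ng where "ng x \<equiv> bneg B x"
abbreviation st where "st x y \<equiv> bstar B x y"
abbreviation mi where "mi x \<equiv> inv\<^bsub>mulgrp B\<^esub> x"

lemma cg: "comm_group (addgrp B)" using br by (simp add: brace_def)
lemma mg: "group (mulgrp B)" using br by (simp add: brace_def)

sublocale G: comm_group "addgrp B" by (rule cg)
sublocale M: group "mulgrp B" by (rule mg)

lemma ad_closed[simp,intro]: "x \<in> A \<Longrightarrow> y \<in> A \<Longrightarrow> x \<oplus> y \<in> A"
  using G.m_closed by simp
lemma mu_closed[simp,intro]: "x \<in> A \<Longrightarrow> y \<in> A \<Longrightarrow> x \<odot> y \<in> A"
  using M.m_closed by simp
lemma zr_closed[simp,intro]: "\<zero> \<in> A" using G.one_closed by simp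
lemma ng_closed[simp,intro]: "x \<in> A \<Longrightarrow> ng x \<in> A"
  using G.inv_closed by (simp add: bneg_def)
lemma mi_closed[simp,intro]: "x \<in> A \<Longrightarrow> mi x \<in> A"
  using M.inv_closed by simp

lemma ad_assoc: "x \<in> A \<Longrightarrow> y \<in> A \<Longrightarrow> z \<in> A \<Longrightarrow> x \<oplus> y \<oplus> z = x \<oplus> (y \<oplus> z)"
  using G.m_assoc by simp
lemma ad_comm: "x \<in> A \<Longrightarrow> y \<in> A \<Longrightarrow> x \<oplus> y = y \<oplus> x"
  using G.m_comm by simp
lemma ad_lcomm: "x \<in> A \<Longrightarrow> y \<in> A \<Longrightarrow> z \<in> A \<Longrightarrow> x \<oplus> (y \<oplus> z) = y \<oplus> (x \<oplus> z)"
  using G.m_lcomm by simp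
lemmas ad_ac = ad_assoc ad_comm ad_lcomm

lemma zr_l[simp]: "x \<in> A \<Longrightarrow> \<zero> \<oplus> x = x" using G.l_one by simp
lemma zr_r[simp]: "x \<in> A \<Longrightarrow> x \<oplus> \<zero> = x" using G.r_one by simp
lemma ng_l[simp]: "x \<in> A \<Longrightarrow> ng x \<oplus> x = \<zero>" using G.l_inv by (simp add: bneg_def)
lemma ng_r[simp]: "x \<in> A \<Longrightarrow> x \<oplus> ng x = \<zero>" using G.r_inv by (simp add: bneg_def)
lemma ng_l2[simp]: "x \<in> A \<Longrightarrow> y \<in> A \<Longrightarrow> ng x \<oplus> (x \<oplus> y) = y"
  by (simp flip: ad_assoc)
lemma ng_r2[simp]: "x \<in> A \<Longrightarrow> y \<in> A \<Longrightarrow> x \<oplus> (ng x \<oplus> y) = y"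
  by (simp flip: ad_assoc)
lemma canc3[simp]: "x \<in> A \<Longrightarrow> y \<in> A \<Longrightarrow> z \<in> A \<Longrightarrow> x \<oplus> (y \<oplus> (ng x \<oplus> z)) = y \<oplus> z"
  "x \<in> A \<Longrightarrow> y \<in> A \<Longrightarrow> z \<in> A \<Longrightarrow> ng x \<oplus> (y \<oplus> (x \<oplus> z)) = y \<oplus> z"
  "x \<in> A \<Longrightarrow> y \<in> A \<Longrightarrow> x \<oplus> (y \<oplus> ng x) = y"
  "x \<in> A \<Longrightarrow> y \<in> A \<Longrightarrow> ng x \<oplus> (y \<oplus> x) = y"
  by (metis ad_lcomm ng_closed ng_r2 ad_closed, metis ad_lcomm ng_closed ng_l2 ad_closed,
      metis ad_comm ng_closed ng_r2, metis ad_comm ng_closed ng_l2)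
lemma canc4[simp]: "x \<in> A \<Longrightarrow> y \<in> A \<Longrightarrow> z \<in> A \<Longrightarrow> w \<in> A \<Longrightarrow> x \<oplus> (y \<oplus> (w \<oplus> (ng x \<oplus> z))) = y \<oplus> (w \<oplus> z)"
  "x \<in> A \<Longrightarrow> y \<in> A \<Longrightarrow> z \<in> A \<Longrightarrow> w \<in> A \<Longrightarrow> ng x \<oplus> (y \<oplus> (w \<oplus> (x \<oplus> z))) = y \<oplus> (w \<oplus> z)"
  "x \<in> A \<Longrightarrow> y \<in> A \<Longrightarrow> w \<in> A \<Longrightarrow> x \<oplus> (y \<oplus> (w \<oplus> ng x)) = y \<oplus> w"
  "x \<in> A \<Longrightarrow> y \<in> A \<Longrightarrow> w \<in> A \<Longrightarrow> ng x \<oplus> (y \<oplus> (w \<oplus> x)) = y \<oplus> w"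
  by (metis ad_lcomm ng_closed canc3 ad_closed)+
lemma ng_ng[simp]: "x \<in> A \<Longrightarrow> ng (ng x) = x" using G.inv_inv by (simp add: bneg_def)
lemma ng_ad: "x \<in> A \<Longrightarrow> y \<in> A \<Longrightarrow> ng (x \<oplus> y) = ng x \<oplus> ng y"
  using G.inv_mult by (simp add: bneg_def)
lemma ng_zr[simp]: "ng \<zero> = \<zero>" using G.inv_one by (simp add: bneg_def)

lemma ad_left_cancel: "x \<in> A \<Longrightarrow> y \<in> A \<Longrightarrow> z \<in> A \<Longrightarrow> (x \<oplus> y = x \<oplus> z) = (y = z)"
  using G.Units_l_cancel G.Units_eq by simp
lemma eq_iff_diff: "x \<in> A \<Longrightarrow> y \<in> A \<Longrightarrow> (x = y) = (x \<oplus> ng y = \<zero>)"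
  by (metis ad_assoc ng_closed ng_l zr_r ng_r)

lemma distr: "a \<in> A \<Longrightarrow> b \<in> A \<Longrightarrow> c \<in> A \<Longrightarrow> a \<odot> (b \<oplus> c) = a \<odot> b \<oplus> a \<odot> c \<oplus> ng a"
  using br by (simp add: brace_def bsub_def)

lemma one_zr: "bone B = \<zero>"
proof -
  have "\<zero> \<odot> (\<zero> \<oplus> \<zero>) = \<zero> \<odot> \<zero> \<oplus> \<zero> \<odot> \<zero> \<oplus> ng \<zero>" by (rule distr) auto
  hence "\<zero> \<odot> \<zero> = \<zero> \<odot> \<zero> \<oplus> \<zero> \<odot> \<zero>" by simp
  hence "\<zero> \<odot> \<zero> = \<zero>" by (metis ad_left_cancel mu_closed zr_closed zr_r)
  thus ?thesis using M.l_one M.r_one M.one_closed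
    by (metis M.l_cancel_one mulgrp_simps zr_closed mu_closed)
qed

lemma mu_zr_l[simp]: "x \<in> A \<Longrightarrow> \<zero> \<odot> x = x" using M.l_one by (simp add: one_zr)
lemma mu_zr_r[simp]: "x \<in> A \<Longrightarrow> x \<odot> \<zero> = x" using M.r_one by (simp add: one_zr)
lemma mi_l[simp]: "x \<in> A \<Longrightarrow> mi x \<odot> x = \<zero>" using M.l_inv by (simp add: one_zr)
lemma mi_r[simp]: "x \<in> A \<Longrightarrow> x \<odot> mi x = \<zero>" using M.r_inv by (simp add: one_zr)
lemma mu_assoc: "x \<in> A \<Longrightarrow> y \<in> A \<Longrightarrow> z \<in> A \<Longrightarrow> x \<odot> y \<odot> z = x \<odot> (y \<odot> z)"
  using M.m_assoc by simp

lemma st_def': "st a b = a \<odot> b \<oplus> ng a \<oplus> ng b"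
  by (simp add: bstar_def bsub_def)
lemma st_closed[simp,intro]: "a \<in> A \<Longrightarrow> b \<in> A \<Longrightarrow> st a b \<in> A"
  by (simp add: st_def')
lemma mu_st: "a \<in> A \<Longrightarrow> b \<in> A \<Longrightarrow> a \<odot> b = a \<oplus> b \<oplus> st a b"
  by (simp add: st_def' ad_ac ng_ad)

lemma st_zr_l[simp]: "x \<in> A \<Longrightarrow> st \<zero> x = \<zero>" by (simp add: st_def')
lemma st_zr_r[simp]: "x \<in> A \<Longrightarrow> st x \<zero> = \<zero>" by (simp add: st_def')

lemma st_add2: "a \<in> A \<Longrightarrow> b \<in> A \<Longrightarrow> c \<in> A \<Longrightarrow> st a (b \<oplus> c) = st a b \<oplus> st a c"
  by (simp add: st_def' distr ng_ad ad_ac)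

lemma st_ng2: "a \<in> A \<Longrightarrow> b \<in> A \<Longrightarrow> st a (ng b) = ng (st a b)"
proof -
  assume a: "a \<in> A" "b \<in> A"
  have "st a (b \<oplus> ng b) = st a b \<oplus> st a (ng b)" using a by (intro st_add2) auto
  hence "\<zero> = st a b \<oplus> st a (ng b)" using a by simp
  thus ?thesis using a by (metis ng_l2 st_closed ng_closed zr_r)
qed

lemma mu_ng: "u \<in> A \<Longrightarrow> v \<in> A \<Longrightarrow> u \<odot> ng v = u \<oplus> u \<oplus> ng (u \<odot> v)"
proof -
  assume a: "u \<in> A" "v \<in> A"
  have "u \<odot> (v \<oplus> ng v) = u \<odot> v \<oplus> u \<odot> ng v \<oplus> ng u" using a by (intro distr) auto
  hence "u = u \<odot> v \<oplus> u \<odot> ng v \<oplus> ng u" using a by simp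
  hence "u \<oplus> u \<oplus> ng (u \<odot> v) = (u \<odot> v \<oplus> u \<odot> ng v \<oplus> ng u) \<oplus> u \<oplus> ng (u \<odot> v)" by simp
  also have "... = u \<odot> ng v" using a by (simp add: ad_ac)
  finally show ?thesis by simp
qed

definition lam where "lam u x = st u x \<oplus> x"
lemma lam_alt: "u \<in> A \<Longrightarrow> x \<in> A \<Longrightarrow> lam u x = ng u \<oplus> u \<odot> x"
  by (simp add: lam_def st_def' ad_ac)
lemma lam_closed[simp,intro]: "u \<in> A \<Longrightarrow> x \<in> A \<Longrightarrow> lam u x \<in> A" by (simp add: lam_def)
lemma lam_comp: "u \<in> A \<Longrightarrow> v \<in> A \<Longrightarrow> x \<in> A \<Longrightarrow> lam u (lam v x) = lam (u \<odot> v) x"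
  by (simp add: lam_alt distr mu_ng ng_ad ad_ac mu_assoc)
lemma lam_zr[simp]: "x \<in> A \<Longrightarrow> lam \<zero> x = x" by (simp add: lam_def)

lemma st_mu1: "u \<in> A \<Longrightarrow> v \<in> A \<Longrightarrow> x \<in> A \<Longrightarrow> st (u \<odot> v) x = st u (st v x) \<oplus> st u x \<oplus> st v x"
proof -
  assume a: "u \<in> A" "v \<in> A" "x \<in> A"
  have "st (u \<odot> v) x = lam (u \<odot> v) x \<oplus> ng x" using a by (simp add: lam_def ad_ac)
  also have "... = lam u (lam v x) \<oplus> ng x" using a by (simp add: lam_comp)
  also have "... = st u (st v x) \<oplus> st u x \<oplus> st v x" using a by (simp add: lam_def st_add2 ad_ac)
  finally show ?thesis .
qed

lemma ad_as_mu: "u \<in> A \<Longrightarrow> v \<in> A \<Longrightarrow> u \<oplus> v = u \<odot> (v \<oplus> st (mi u) v)"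
proof -
  assume a: "u \<in> A" "v \<in> A"
  have "u \<odot> (v \<oplus> st (mi u) v) = u \<oplus> lam u (lam (mi u) v)"
    using a by (simp add: mu_st lam_def ad_ac)
  also have "... = u \<oplus> v" using a by (simp add: lam_comp)
  finally show ?thesis by simp
qed

lemma st_mi: "u \<in> A \<Longrightarrow> y \<in> A \<Longrightarrow> st (mi u) (st u y) \<oplus> st (mi u) y \<oplus> st u y = \<zero>"
  using st_mu1[of "mi u" u y] by simp

lemma ng_unique: "a \<in> A \<Longrightarrow> b \<in> A \<Longrightarrow> a \<oplus> b = \<zero> \<Longrightarrow> a = ng b"
  by (metis ng_l2 ng_closed ad_comm zr_r ng_r ad_assoc)

lemma mi_expr: "x \<in> A \<Longrightarrow> mi x = ng (x \<oplus> st (mi x) x)"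
proof -
  assume x: "x \<in> A"
  have "mi x \<odot> x = \<zero>" using x by simp
  hence "mi x \<oplus> (x \<oplus> st (mi x) x) = \<zero>" using x by (simp add: mu_st ad_assoc)
  thus ?thesis using x by (intro ng_unique) auto
qed

subsection \<open>Integer multiples\<close>

definition mul :: "int \<Rightarrow> 'a \<Rightarrow> 'a" where "mul m x = x [^]\<^bsub>addgrp B\<^esub> m"

lemma mul_closed[simp,intro]: "x \<in> A \<Longrightarrow> mul m x \<in> A"
  unfolding mul_def using G.int_pow_closed by simp
lemma mul_add: "x \<in> A \<Longrightarrow> mul (m + n) x = mul m x \<oplus> mul n x"
  unfolding mul_def using G.int_pow_mult by simp
lemma mul_mul: "x \<in> A \<Longrightarrow> mul m (mul n x) = mul (n * m) x"
  unfolding mul_def using G.int_pow_pow by simp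
lemma mul_distr: "x \<in> A \<Longrightarrow> y \<in> A \<Longrightarrow> mul m (x \<oplus> y) = mul m x \<oplus> mul m y"
  unfolding mul_def using G.int_pow_mult_distrib G.m_comm by simp
lemma mul_1[simp]: "x \<in> A \<Longrightarrow> mul 1 x = x" unfolding mul_def using G.int_pow_1 by simp
lemma mul_0[simp]: "mul 0 x = \<zero>" unfolding mul_def by simp
lemma mul_neg: "x \<in> A \<Longrightarrow> mul (- m) x = ng (mul m x)"
  unfolding mul_def bneg_def using G.int_pow_neg by simp
lemma mul_zr[simp]: "mul m \<zero> = \<zero>" unfolding mul_def using G.int_pow_one by simp
lemma mul_ng: "x \<in> A \<Longrightarrow> mul m (ng x) = ng (mul m x)"
  unfolding mul_def bneg_def using G.int_pow_inv by simp
lemma mul_nat: "mul (int n) x = x [^]\<^bsub>addgrp B\<^esub> n"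
  unfolding mul_def by (simp add: int_pow_int)

lemma st_mul2: "a \<in> A \<Longrightarrow> b \<in> A \<Longrightarrow> st a (mul m b) = mul m (st a b)"
proof (induct m rule: int_induct[where k=0])
  case base then show ?case by simp
next
  case (step1 i) then show ?case by (simp add: mul_add st_add2)
next
  case (step2 i)
  have e: "mul (i - 1) b = mul i b \<oplus> ng b" using step2 mul_add[of b i "-1"] mul_neg[of b 1] by simp
  have e2: "mul (i - 1) (st a b) = mul i (st a b) \<oplus> ng (st a b)"
    using step2 mul_add[of "st a b" i "-1"] mul_neg[of "st a b" 1] by simp
  show ?case using step2 by (simp add: e e2 st_add2 st_ng2)
qed

subsection \<open>Torsion\<close>

abbreviation "Tor \<equiv> torsion B"

lemma tor_iff: "t \<in> Tor \<longleftrightarrow> t \<in> A \<and> (\<exists>n::nat. n > 0 \<and> mul (int n) t = \<zero>)"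
  by (simp add: torsion_def mul_nat)

lemma tor_sub: "Tor \<subseteq> A" by (auto simp: tor_iff)
lemma tor_zr[simp]: "\<zero> \<in> Tor" by (auto simp: tor_iff intro: exI[of _ 1])
lemma tor_ad: "x \<in> Tor \<Longrightarrow> y \<in> Tor \<Longrightarrow> x \<oplus> y \<in> Tor"
proof -
  assume "x \<in> Tor" "y \<in> Tor"
  then obtain n k where x: "x \<in> A" "n > (0::nat)" "mul (int n) x = \<zero>" and y: "y \<in> A" "k > (0::nat)" "mul (int k) y = \<zero>"
    by (auto simp: tor_iff)
  have "mul (int (n * k)) x = \<zero>" using x mul_mul[of x "int k" "int n"] by simp
  moreover have "mul (int (n * k)) y = \<zero>" using y mul_mul[of y "int n" "int k"] by (simp add: mult.commute)
  ultimately have "mul (int (n * k)) (x \<oplus> y) = \<zero>" using x y by (simp add: mul_distr)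
  thus ?thesis using x y by (auto simp: tor_iff intro!: exI[of _ "n*k"])
qed
lemma tor_ng: "x \<in> Tor \<Longrightarrow> ng x \<in> Tor"
  by (auto simp: tor_iff mul_ng)
lemma tor_mul: "x \<in> Tor \<Longrightarrow> mul m x \<in> Tor"
proof -
  assume "x \<in> Tor"
  then obtain n where x: "x \<in> A" "n > (0::nat)" "mul (int n) x = \<zero>" by (auto simp: tor_iff)
  have "mul (int n) (mul m x) = mul m (mul (int n) x)" by (metis mul_mul mult.commute x(1))
  also have "... = \<zero>" using x by simp
  finally show ?thesis using x by (auto simp: tor_iff)
qed
lemma tor_of_mul: "x \<in> A \<Longrightarrow> m \<noteq> 0 \<Longrightarrow> mul m x \<in> Tor \<Longrightarrow> x \<in> Tor"
proof -
  assume x: "x \<in> A" "m \<noteq> 0" "mul m x \<in> Tor"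
  then obtain n where n: "n > (0::nat)" "mul (int n) (mul m x) = \<zero>" by (auto simp: tor_iff)
  hence e: "mul (m * int n) x = \<zero>" using x by (simp add: mul_mul)
  show ?thesis
  proof (cases "m * int n > 0")
    case True
    then show ?thesis using x e by (auto simp: tor_iff intro!: exI[of _ "nat (m * int n)"])
  next
    case False
    have "m < 0" using False x(2) n(1) by (metis mult_pos_pos not_less linorder_neqE_linordered_idom of_nat_0_less_iff)
    hence "- (m * int n) > 0" using n by (simp add: mult_neg_pos)
    moreover have "mul (- (m * int n)) x = \<zero>" using x e by (simp add: mul_neg)
    ultimately show ?thesis using x by (auto simp: tor_iff intro!: exI[of _ "nat (- (m * int n))"])
  qed
qed

subsection \<open>Ideals\<close>

definition idl where "idl L \<longleftrightarrow> L \<subseteq> A \<and> \<zero> \<in> L \<and> (\<forall>x\<in>L. \<forall>y\<in>L. x \<oplus> y \<in> L) \<and> (\<forall>x\<in>L. ng x \<in> L)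
   \<and> (\<forall>a\<in>A. \<forall>z\<in>L. st a z \<in> L \<and> st z a \<in> L)"

lemma idl_brace_ideal: "idl L \<Longrightarrow> brace_ideal L B"
proof -
  assume L: "idl L"
  have sub: "L \<subseteq> A" using L by (simp add: idl_def)
  have "subgroup L (addgrp B)"
    using L by (unfold_locales) (auto simp: idl_def bneg_def)
  moreover have "subgroup L (mulgrp B)"
  proof (unfold_locales)
    show "L \<subseteq> carrier (mulgrp B)" using sub by simp
    show "\<one>\<^bsub>mulgrp B\<^esub> \<in> L" using L by (simp add: idl_def one_zr)
    fix x y assume xy: "x \<in> L" "y \<in> L"
    hence "x \<in> A" "y \<in> A" using sub by auto
    thus "x \<otimes>\<^bsub>mulgrp B\<^esub> y \<in> L" using L xy by (simp add: mu_st idl_def)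
  next
    fix x assume x: "x \<in> L"
    hence xA: "x \<in> A" using sub by auto
    have "st (mi x) x \<in> L" using L x xA by (simp add: idl_def)
    hence "x \<oplus> st (mi x) x \<in> L" using L x by (simp add: idl_def)
    hence "ng (x \<oplus> st (mi x) x) \<in> L" using L by (simp add: idl_def)
    hence "mi x \<in> L" using mi_expr[OF xA] by simp
    thus "inv\<^bsub>mulgrp B\<^esub> x \<in> L" .
  qed
  ultimately show ?thesis using L by (simp add: brace_ideal_def subbrace_def idl_def)
qed

lemma brace_ideal_idl: "brace_ideal L B \<Longrightarrow> idl L"
proof -
  assume L: "brace_ideal L B"
  hence s: "subgroup L (addgrp B)" by (simp add: brace_ideal_def subbrace_def)
  show ?thesis unfolding idl_def
    using subgroup.subset[OF s] subgroup.m_closed[OF s] subgroup.one_closed[OF s] subgroup.m_inv_closed[OF s] L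
    by (auto simp: bneg_def brace_ideal_def)
qed

lemma idl_iff: "idl L \<longleftrightarrow> brace_ideal L B" using idl_brace_ideal brace_ideal_idl by blast

lemma addgrp_sub: "addgrp (sub_brace B J) = (addgrp B)\<lparr>carrier := J\<rparr>"
  by (simp add: addgrp_def sub_brace_def)
lemma mulgrp_sub: "mulgrp (sub_brace B J) = (mulgrp B)\<lparr>carrier := J\<rparr>"
  by (simp add: mulgrp_def sub_brace_def)

lemma idl_sub_ideal:
  assumes J: "idl J" and I: "I \<subseteq> J" "\<zero> \<in> I" "\<forall>x\<in>I. \<forall>y\<in>I. x \<oplus> y \<in> I" "\<forall>x\<in>I. ng x \<in> I"
    and st: "\<forall>a\<in>J. \<forall>z\<in>I. st a z \<in> I \<and> st z a \<in> I"
  shows "brace_ideal I (sub_brace B J)"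
proof -
  have JB: "brace_ideal J B" using J idl_brace_ideal by blast
  have sa: "subgroup J (addgrp B)" and sm: "subgroup J (mulgrp B)" using JB by (auto simp: brace_ideal_def subbrace_def)
  have JA: "J \<subseteq> A" using J by (simp add: idl_def)
  have invJ: "inv\<^bsub>addgrp (sub_brace B J)\<^esub> x = ng x" if "x \<in> J" for x
    using G.m_inv_consistent[OF sa that] by (simp add: addgrp_sub bneg_def)
  have minvJ: "inv\<^bsub>mulgrp (sub_brace B J)\<^esub> x = mi x" if "x \<in> J" for x
    using M.m_inv_consistent[OF sm that] by (simp add: mulgrp_sub)
  have stJ: "bstar (sub_brace B J) a b = st a b" if "a \<in> J" "b \<in> J" for a b
  proof -
    have "bneg (sub_brace B J) a = ng a" "bneg (sub_brace B J) b = ng b" using invJ that by (simp_all add: bneg_def)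
    thus ?thesis by (simp add: bstar_def bsub_def sub_brace_def)
  qed
  have "subgroup I (addgrp (sub_brace B J))"
  proof (rule subgroup.intro)
    show "I \<subseteq> carrier (addgrp (sub_brace B J))" using I by (simp add: addgrp_sub)
    show "\<one>\<^bsub>addgrp (sub_brace B J)\<^esub> \<in> I" using I by (simp add: addgrp_sub)
    fix x y assume "x \<in> I" "y \<in> I"
    thus "x \<otimes>\<^bsub>addgrp (sub_brace B J)\<^esub> y \<in> I" using I by (simp add: addgrp_sub)
  next
    fix x assume "x \<in> I"
    thus "inv\<^bsub>addgrp (sub_brace B J)\<^esub> x \<in> I" using I invJ by auto
  qed
  moreover have "subgroup I (mulgrp (sub_brace B J))"
  proof (rule subgroup.intro)
    show "I \<subseteq> carrier (mulgrp (sub_brace B J))" using I by (simp add: mulgrp_sub)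
    show "\<one>\<^bsub>mulgrp (sub_brace B J)\<^esub> \<in> I" using I by (simp add: mulgrp_sub one_zr)
    fix x y assume xy: "x \<in> I" "y \<in> I"
    hence xyA: "x \<in> A" "y \<in> A" using I JA by auto
    have "st x y \<in> I" using st xy I by auto
    hence "x \<oplus> y \<oplus> st x y \<in> I" using I xy by auto
    thus "x \<otimes>\<^bsub>mulgrp (sub_brace B J)\<^esub> y \<in> I" using xyA by (simp add: mulgrp_sub mu_st)
  next
    fix x assume x: "x \<in> I"
    hence xA: "x \<in> A" and xJ: "x \<in> J" using I JA by auto
    have "mi x \<in> J" using sm xJ subgroup.m_inv_closed[OF sm] by simp
    hence "st (mi x) x \<in> I" using st x by auto
    hence "x \<oplus> st (mi x) x \<in> I" using I x by auto
    hence "ng (x \<oplus> st (mi x) x) \<in> I" using I by auto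
    hence "mi x \<in> I" using mi_expr[OF xA] by simp
    thus "inv\<^bsub>mulgrp (sub_brace B J)\<^esub> x \<in> I" using minvJ xJ by simp
  qed
  moreover have "\<forall>a\<in>bcar (sub_brace B J). \<forall>z\<in>I. bstar (sub_brace B J) a z \<in> I \<and> bstar (sub_brace B J) z a \<in> I"
    using st stJ I by (auto simp: sub_brace_def)
  ultimately show ?thesis by (simp add: brace_ideal_def subbrace_def)
qed

lemma T_use:
  assumes T: "T_brace B" and J: "idl J" and I: "I \<subseteq> J" "\<zero> \<in> I" "\<forall>x\<in>I. \<forall>y\<in>I. x \<oplus> y \<in> I" "\<forall>x\<in>I. ng x \<in> I"
    and st: "\<forall>a\<in>J. \<forall>z\<in>I. st a z \<in> I \<and> st z a \<in> I"
  shows "idl I"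
proof -
  have 1: "brace_ideal I (sub_brace B J)" using idl_sub_ideal[OF J I st] .
  have 2: "brace_ideal J B" using J idl_iff by simp
  have "brace_ideal I B" using T 1 2 unfolding T_brace_def by blast
  thus ?thesis using idl_iff by simp
qed

end

context brace_ctx begin

definition sg where "sg S \<longleftrightarrow> S \<subseteq> A \<and> \<zero> \<in> S \<and> (\<forall>x\<in>S. \<forall>y\<in>S. x \<oplus> y \<in> S) \<and> (\<forall>x\<in>S. ng x \<in> S)"

lemma sgD: "sg S \<Longrightarrow> S \<subseteq> A" "sg S \<Longrightarrow> \<zero> \<in> S" "sg S \<Longrightarrow> x \<in> S \<Longrightarrow> y \<in> S \<Longrightarrow> x \<oplus> y \<in> S"
   "sg S \<Longrightarrow> x \<in> S \<Longrightarrow> ng x \<in> S"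
  by (auto simp: sg_def)

lemma sg_mem: "sg S \<Longrightarrow> x \<in> S \<Longrightarrow> x \<in> A" by (auto simp: sg_def)

lemma idl_sg: "idl L \<Longrightarrow> sg L" by (simp add: idl_def sg_def)
lemma idl_st: "idl L \<Longrightarrow> a \<in> A \<Longrightarrow> z \<in> L \<Longrightarrow> st a z \<in> L" "idl L \<Longrightarrow> a \<in> A \<Longrightarrow> z \<in> L \<Longrightarrow> st z a \<in> L"
  by (auto simp: idl_def)

lemma sg_mul: "sg S \<Longrightarrow> x \<in> S \<Longrightarrow> mul m x \<in> S"
proof (induct m rule: int_induct[where k=0])
  case base then show ?case by (simp add: sg_def)
next
  case (step1 i) then show ?case using sg_mem[of S x] by (simp add: mul_add sg_def)
next
  case (step2 i)
  have "mul (i - 1) x = mul i x \<oplus> ng x" using step2 sg_mem[of S x] mul_add[of x i "-1"] mul_neg[of x 1] by simp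
  then show ?case using step2 by (simp add: sg_def)
qed

lemma sg_tor: "sg Tor" by (simp add: sg_def tor_sub tor_ad tor_ng)

definition cg where "cg S a b \<longleftrightarrow> a \<in> A \<and> b \<in> A \<and> a \<oplus> ng b \<in> S"

lemma cg_refl: "sg S \<Longrightarrow> a \<in> A \<Longrightarrow> cg S a a" by (simp add: cg_def sg_def)
lemma cg_sym: "sg S \<Longrightarrow> cg S a b \<Longrightarrow> cg S b a"
  by (auto simp: cg_def sg_def) (metis ng_ad ng_ng ng_closed ad_comm)
lemma cg_trans: "sg S \<Longrightarrow> cg S a b \<Longrightarrow> cg S b c \<Longrightarrow> cg S a c"
proof -
  assume s: "sg S" "cg S a b" "cg S b c"
  hence "(a \<oplus> ng b) \<oplus> (b \<oplus> ng c) \<in> S" by (simp add: cg_def sg_def)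
  moreover have "(a \<oplus> ng b) \<oplus> (b \<oplus> ng c) = a \<oplus> ng c" using s by (simp add: cg_def ad_assoc)
  ultimately show ?thesis using s by (simp add: cg_def)
qed
lemma cg_add: "sg S \<Longrightarrow> cg S a b \<Longrightarrow> cg S c d \<Longrightarrow> cg S (a \<oplus> c) (b \<oplus> d)"
proof -
  assume s: "sg S" "cg S a b" "cg S c d"
  hence "(a \<oplus> ng b) \<oplus> (c \<oplus> ng d) \<in> S" by (simp add: cg_def sg_def)
  moreover have "(a \<oplus> ng b) \<oplus> (c \<oplus> ng d) = (a \<oplus> c) \<oplus> ng (b \<oplus> d)" using s by (simp add: cg_def ad_ac ng_ad)
  ultimately show ?thesis using s by (simp add: cg_def)
qed
lemma cg_ng: "sg S \<Longrightarrow> cg S a b \<Longrightarrow> cg S (ng a) (ng b)"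
proof -
  assume s: "sg S" "cg S a b"
  hence "ng (a \<oplus> ng b) \<in> S" by (simp add: cg_def sg_def)
  moreover have "ng (a \<oplus> ng b) = ng a \<oplus> ng (ng b)" using s by (simp add: cg_def ng_ad)
  ultimately show ?thesis using s by (simp add: cg_def)
qed
lemma cg_mul: "sg S \<Longrightarrow> cg S a b \<Longrightarrow> cg S (mul m a) (mul m b)"
proof -
  assume s: "sg S" "cg S a b"
  hence "mul m (a \<oplus> ng b) \<in> S" by (simp add: cg_def sg_mul)
  moreover have "mul m (a \<oplus> ng b) = mul m a \<oplus> ng (mul m b)" using s by (simp add: cg_def mul_distr mul_ng)
  ultimately show ?thesis using s by (simp add: cg_def)
qed
lemma cg_mem: "sg S \<Longrightarrow> cg S a b \<Longrightarrow> b \<in> S \<Longrightarrow> a \<in> S"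
proof -
  assume s: "sg S" "cg S a b" "b \<in> S"
  hence "(a \<oplus> ng b) \<oplus> b \<in> S" by (simp add: cg_def sg_def)
  moreover have "(a \<oplus> ng b) \<oplus> b = a" using s by (simp add: cg_def ad_assoc)
  ultimately show ?thesis by simp
qed
lemma cg_mono: "S \<subseteq> S' \<Longrightarrow> cg S a b \<Longrightarrow> cg S' a b" by (auto simp: cg_def)
lemma cg_addS: "sg S \<Longrightarrow> a \<in> A \<Longrightarrow> s \<in> S \<Longrightarrow> cg S (a \<oplus> s) a"
  using sg_mem[of S s] by (simp add: cg_def ad_ac)
lemma cg_memS: "sg S \<Longrightarrow> a \<in> S \<Longrightarrow> cg S a \<zero>"
  using sg_mem[of S a] by (simp add: cg_def)

definition ZN where "ZN N = {z \<in> A. \<forall>y\<in>A. st z y \<in> N \<and> st y z \<in> N}"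
definition L2 where "L2 N = {u \<in> A. \<forall>y\<in>A. st u y \<in> ZN N}"

lemma ZN_A: "ZN N \<subseteq> A" by (auto simp: ZN_def)
lemma N_ZN: "idl N \<Longrightarrow> N \<subseteq> ZN N" by (auto simp: ZN_def idl_def)
lemma ZN_st: "z \<in> ZN N \<Longrightarrow> y \<in> A \<Longrightarrow> st z y \<in> N" "z \<in> ZN N \<Longrightarrow> y \<in> A \<Longrightarrow> st y z \<in> N"
  by (auto simp: ZN_def)

lemma st_ad1: "u \<in> A \<Longrightarrow> v \<in> A \<Longrightarrow> x \<in> A \<Longrightarrow>
   st (u \<oplus> v) x = st u (st (v \<oplus> st (mi u) v) x) \<oplus> st u x \<oplus> st (v \<oplus> st (mi u) v) x"
proof -
  assume a: "u \<in> A" "v \<in> A" "x \<in> A"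
  have e: "u \<oplus> v = u \<odot> (v \<oplus> st (mi u) v)" using ad_as_mu a by blast
  show ?thesis unfolding e using a by (intro st_mu1) auto
qed

lemma M0: assumes N: "idl N" and v: "v \<in> A" and n: "n \<in> N" and x: "x \<in> A"
  shows "cg N (st (v \<oplus> n) x) (st v x)"
proof -
  have nA: "n \<in> A" using N n by (auto simp: idl_def)
  let ?w = "n \<oplus> st (mi v) n"
  have w: "?w \<in> N" using N n v by (simp add: idl_def)
  hence wA: "?w \<in> A" using N by (auto simp: idl_def)
  have s1: "st ?w x \<in> N" using N w x by (simp add: idl_def)
  have s2: "st v (st ?w x) \<in> N" using N s1 v by (simp add: idl_def)
  have e: "st (v \<oplus> n) x = st v x \<oplus> (st v (st ?w x) \<oplus> st ?w x)"
    using st_ad1[OF v nA x] v wA x by (simp add: ad_ac)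
  show ?thesis unfolding e using N s1 s2 v x wA by (intro cg_addS) (auto simp: idl_sg idl_def)
qed

lemma M1: assumes N: "idl N" and v: "v \<in> A" and z: "z \<in> ZN N" and x: "x \<in> A"
  shows "cg N (st (v \<oplus> z) x) (st v x)"
proof -
  have zA: "z \<in> A" using z ZN_A by auto
  let ?n0 = "st (mi v) z"
  have n0: "?n0 \<in> N" using z v by (simp add: ZN_st)
  let ?w = "z \<oplus> ?n0"
  have wA: "?w \<in> A" using zA v by simp
  have "cg N (st ?w x) (st z x)" using M0[OF N zA n0 x] .
  moreover have "st z x \<in> N" using z x by (simp add: ZN_st)
  ultimately have s1: "st ?w x \<in> N" using cg_mem idl_sg N by blast
  have s2: "st v (st ?w x) \<in> N" using N s1 v by (simp add: idl_def)
  have e: "st (v \<oplus> z) x = st v x \<oplus> (st v (st ?w x) \<oplus> st ?w x)"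
    using st_ad1[OF v zA x] v wA x by (simp add: ad_ac)
  show ?thesis unfolding e using N s1 s2 v x wA by (intro cg_addS) (auto simp: idl_sg idl_def)
qed

lemma sg_ZN: assumes N: "idl N" shows "sg (ZN N)"
proof -
  have sN: "sg N" using N idl_sg by simp
  have "\<zero> \<in> ZN N" using N by (simp add: ZN_def idl_def)
  moreover have "x \<oplus> y \<in> ZN N" if xyZ: "x \<in> ZN N" "y \<in> ZN N" for x y
  proof -
    have xy: "x \<in> A" "y \<in> A" using xyZ ZN_A by auto
    have "st (x \<oplus> y) b \<in> N" if b: "b \<in> A" for b
      using cg_mem[OF sN M1[OF N xy(1) \<open>y \<in> ZN N\<close> b]] ZN_st \<open>x \<in> ZN N\<close> b by blast
    moreover have "st b (x \<oplus> y) \<in> N" if b: "b \<in> A" for b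
      using b xy ZN_st[OF xyZ(1) b] ZN_st[OF xyZ(2) b] sN by (simp add: st_add2 sgD)
    ultimately show ?thesis using xy by (simp add: ZN_def)
  qed
  moreover have "ng x \<in> ZN N" if x: "x \<in> ZN N" for x
  proof -
    have xA: "x \<in> A" using x ZN_A by auto
    have "st (ng x) b \<in> N" if b: "b \<in> A" for b
    proof -
      have "cg N (st (ng x \<oplus> x) b) (st (ng x) b)" using M1[OF N ng_closed[OF xA] x b] .
      hence "cg N \<zero> (st (ng x) b)" using xA b by simp
      hence "cg N (st (ng x) b) \<zero>" using cg_sym sN by blast
      thus ?thesis using cg_mem sN sgD(2) by blast
    qed
    moreover have "st b (ng x) \<in> N" if b: "b \<in> A" for b
      using b xA ZN_st x sN by (simp add: st_ng2 sgD)
    ultimately show ?thesis using xA by (simp add: ZN_def)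
  qed
  ultimately show ?thesis using ZN_A by (simp add: sg_def)
qed

lemma L2_A: "L2 N \<subseteq> A" by (auto simp: L2_def)

lemma L2_mi: assumes N: "idl N" and u: "u \<in> L2 N" and y: "y \<in> A"
  shows "cg N (st (mi u) y) (ng (st u y))"
proof -
  have uA: "u \<in> A" using u L2_A by auto
  have z: "st u y \<in> ZN N" using u y by (simp add: L2_def)
  have "st (mi u) (st u y) \<in> N" using z uA by (simp add: ZN_st)
  moreover have "st (mi u) (st u y) \<oplus> st (mi u) y \<oplus> st u y = \<zero>" using st_mi uA y by simp
  hence "st (mi u) (st u y) = ng (st (mi u) y \<oplus> st u y)" using uA y
    by (intro ng_unique) (auto simp: ad_assoc)
  ultimately have "ng (ng (st (mi u) y \<oplus> st u y)) \<in> N" using N by (simp add: idl_def)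
  hence "st (mi u) y \<oplus> st u y \<in> N" using uA y by simp
  thus ?thesis using uA y by (simp add: cg_def)
qed

lemma L2_mi_mem: assumes N: "idl N" and u: "u \<in> L2 N" shows "mi u \<in> L2 N"
proof -
  have uA: "u \<in> A" using u L2_A by auto
  have "st (mi u) y \<in> ZN N" if y: "y \<in> A" for y
  proof -
    have "st u y \<in> ZN N" using u y by (simp add: L2_def)
    hence "ng (st u y) \<in> ZN N" using sg_ZN[OF N] by (simp add: sgD)
    thus ?thesis using cg_mem[OF sg_ZN[OF N] cg_mono[OF N_ZN[OF N] L2_mi[OF N u y]]] by simp
  qed
  thus ?thesis using uA by (simp add: L2_def)
qed

lemma M2: assumes N: "idl N" and u: "u \<in> L2 N" and v: "v \<in> L2 N" and x: "x \<in> A"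
  shows "cg N (st (u \<oplus> v) x) (st u x \<oplus> st v x)"
proof -
  have uA: "u \<in> A" and vA: "v \<in> A" using u v L2_A by auto
  have sN: "sg N" using N idl_sg by simp
  let ?z = "st (mi u) v"
  have z: "?z \<in> ZN N" using L2_mi_mem[OF N u] vA by (simp add: L2_def)
  let ?w = "v \<oplus> ?z"
  have wA: "?w \<in> A" using uA vA by simp
  have c1: "cg N (st ?w x) (st v x)" using M1[OF N vA z x] .
  have "st v x \<in> ZN N" using v x by (simp add: L2_def)
  hence "st ?w x \<in> ZN N" using cg_mem[OF sg_ZN[OF N] cg_mono[OF N_ZN[OF N] c1]] by simp
  hence s2: "st u (st ?w x) \<in> N" using uA by (simp add: ZN_st)
  have e: "st (u \<oplus> v) x = st u (st ?w x) \<oplus> st u x \<oplus> st ?w x" using st_ad1[OF uA vA x] .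
  have "cg N (st u (st ?w x) \<oplus> st u x \<oplus> st ?w x) (\<zero> \<oplus> st u x \<oplus> st v x)"
    using s2 c1 sN uA x wA by (intro cg_add cg_memS cg_refl) auto
  thus ?thesis using e uA vA x by simp
qed

lemma sg_L2: assumes N: "idl N" shows "sg (L2 N)"
proof -
  have sZ: "sg (ZN N)" using sg_ZN[OF N] .
  have "\<zero> \<in> L2 N" using sZ by (simp add: L2_def sgD)
  moreover have "x \<oplus> y \<in> L2 N" if xyL: "x \<in> L2 N" "y \<in> L2 N" for x y
  proof -
    have xy: "x \<in> A" "y \<in> A" using xyL L2_A by auto
    have "st (x \<oplus> y) b \<in> ZN N" if b: "b \<in> A" for b
    proof -
      have "st x b \<oplus> st y b \<in> ZN N" using \<open>x \<in> L2 N\<close> \<open>y \<in> L2 N\<close> b sZ by (simp add: L2_def sgD)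
      thus ?thesis using cg_mem[OF sZ cg_mono[OF N_ZN[OF N] M2[OF N xyL b]]] by simp
    qed
    thus ?thesis using xy by (simp add: L2_def)
  qed
  moreover have "ng x \<in> L2 N" if x: "x \<in> L2 N" for x
  proof -
    have xA: "x \<in> A" using x L2_A by auto
    have mx: "mi x \<in> L2 N" using L2_mi_mem[OF N x] .
    have h: "ng (mi x) = x \<oplus> st (mi x) x"
    proof -
      have "ng (mi x) = ng (ng (x \<oplus> st (mi x) x))" using mi_expr[OF xA] by (rule arg_cong)
      also have "... = x \<oplus> st (mi x) x" using xA by simp
      finally show ?thesis .
    qed
    have "mi x \<oplus> st (mi x) x \<oplus> x = mi x \<oplus> (x \<oplus> st (mi x) x)" using xA by (simp add: ad_ac)
    also have "... = \<zero>" unfolding h[symmetric] using xA by simp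
    finally have e: "ng x = mi x \<oplus> st (mi x) x" using xA by (intro ng_unique[symmetric]) auto
    have z: "st (mi x) x \<in> ZN N" using mx xA by (simp add: L2_def)
    have "st (ng x) b \<in> ZN N" if b: "b \<in> A" for b
    proof -
      have "st (mi x) b \<in> ZN N" using mx b by (simp add: L2_def)
      thus ?thesis using cg_mem[OF sZ cg_mono[OF N_ZN[OF N] M1[OF N _ z b]]] e xA by simp
    qed
    thus ?thesis using xA by (simp add: L2_def)
  qed
  ultimately show ?thesis using L2_A by (simp add: sg_def)
qed

lemma L2_ng: assumes N: "idl N" and u: "u \<in> L2 N" and x: "x \<in> A"
  shows "cg N (st (ng u) x) (ng (st u x))"
proof -
  have sN: "sg N" using N idl_sg by simp
  have uA: "u \<in> A" using u L2_A by auto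
  have nu: "ng u \<in> L2 N" using sg_L2[OF N] u by (simp add: sgD)
  have "cg N (st (u \<oplus> ng u) x) (st u x \<oplus> st (ng u) x)" using M2[OF N u nu x] .
  hence "cg N \<zero> (st u x \<oplus> st (ng u) x)" using uA x by simp
  hence "st u x \<oplus> st (ng u) x \<in> N" using sN cg_sym cg_mem sgD(2) by blast
  thus ?thesis using uA x by (simp add: cg_def ad_comm)
qed

lemma M3: assumes N: "idl N" and u: "u \<in> L2 N" and x: "x \<in> A"
  shows "cg N (st (mul m u) x) (mul m (st u x))"
proof (induct m rule: int_induct[where k=0])
  case base then show ?case using N x L2_A u by (auto intro: cg_refl idl_sg)
next
  case (step1 i)
  have uA: "u \<in> A" using u L2_A by auto
  have mi: "mul i u \<in> L2 N" using sg_mul[OF sg_L2[OF N] u] .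
  have "cg N (st (mul i u \<oplus> u) x) (st (mul i u) x \<oplus> st u x)" using M2[OF N mi u x] .
  moreover have "cg N (st (mul i u) x \<oplus> st u x) (mul i (st u x) \<oplus> st u x)"
    using step1(2) N uA x by (intro cg_add cg_refl) (auto intro: idl_sg)
  ultimately show ?case using uA x cg_trans[OF idl_sg[OF N]] by (simp add: mul_add)
next
  case (step2 i)
  have uA: "u \<in> A" using u L2_A by auto
  have mi: "mul i u \<in> L2 N" using sg_mul[OF sg_L2[OF N] u] .
  have nu: "ng u \<in> L2 N" using sg_L2[OF N] u by (simp add: sgD)
  have e1: "mul (i - 1) u = mul i u \<oplus> ng u" using uA mul_add[of u i "-1"] mul_neg[of u 1] by simp
  have e2: "mul (i - 1) (st u x) = mul i (st u x) \<oplus> ng (st u x)"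
    using uA x mul_add[of "st u x" i "-1"] mul_neg[of "st u x" 1] by simp
  have "cg N (st (mul i u \<oplus> ng u) x) (st (mul i u) x \<oplus> st (ng u) x)" using M2[OF N mi nu x] .
  moreover have "cg N (st (mul i u) x \<oplus> st (ng u) x) (mul i (st u x) \<oplus> ng (st u x))"
    using step2(2) N L2_ng[OF N u x] by (intro cg_add) (auto intro: idl_sg)
  ultimately show ?case unfolding e1 e2 using cg_trans[OF idl_sg[OF N]] by blast
qed

end

context brace_ctx begin

lemma split3: "P \<in> A \<Longrightarrow> Q \<in> A \<Longrightarrow> n \<in> A \<Longrightarrow> X = P \<oplus> Q \<oplus> n \<Longrightarrow> P = X \<oplus> ng (Q \<oplus> n)"
  by (simp add: ad_assoc)

lemma RL0:
  assumes T: "T_brace B" and N: "idl N" and b: "b \<in> L2 N" and bR: "\<forall>x\<in>A. st x b \<in> ZN N"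
  shows "\<forall>x\<in>A. st x b \<in> {mul p b \<oplus> mul q (st b b) \<oplus> n | p q n. n \<in> N}
              \<and> st b x \<in> {mul p b \<oplus> mul q (st b b) \<oplus> n | p q n. n \<in> N}"
proof -
  define e where "e = st b b"
  define I where "I = {mul p b \<oplus> mul q e \<oplus> n | p q n. n \<in> N}"
  define J where "J = {mul m b \<oplus> z | m z. z \<in> ZN N}"
  have sN: "sg N" using N idl_sg by simp
  have sZ: "sg (ZN N)" using sg_ZN[OF N] .
  have NA: "N \<subseteq> A" using sgD(1)[OF sN] .
  have NZ: "N \<subseteq> ZN N" using N_ZN[OF N] .
  have bA: "b \<in> A" using b L2_A by auto
  have eZ: "e \<in> ZN N" using b bA by (simp add: L2_def e_def)
  have eA: "e \<in> A" using eZ ZN_A by auto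
  have ZJ: "ZN N \<subseteq> J"
  proof
    fix y assume y: "y \<in> ZN N"
    hence "y = mul 0 b \<oplus> y" using ZN_A[of N] by auto
    thus "y \<in> J" using y unfolding J_def by blast
  qed
  have JA: "J \<subseteq> A" unfolding J_def using ZN_A bA by auto
  have stJ: "cg N (st j x) (mul m (st b x))" if "j = mul m b \<oplus> z" "z \<in> ZN N" "x \<in> A" for j m z x
  proof -
    have "cg N (st (mul m b \<oplus> z) x) (st (mul m b) x)" using M1[OF N _ that(2) that(3)] bA by simp
    moreover have "cg N (st (mul m b) x) (mul m (st b x))" using M3[OF N b that(3)] .
    ultimately show ?thesis using that(1) cg_trans[OF sN] by blast
  qed
  have idlJ: "idl J"
    unfolding idl_def
  proof (intro conjI ballI)
    show "J \<subseteq> A" using JA .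
    show "\<zero> \<in> J" using ZJ sgD(2)[OF sZ] by blast
  next
    fix x y assume "x \<in> J" "y \<in> J"
    then obtain m z m' z' where x: "x = mul m b \<oplus> z" "z \<in> ZN N" and y: "y = mul m' b \<oplus> z'" "z' \<in> ZN N"
      unfolding J_def by blast
    have zA: "z \<in> A" "z' \<in> A" using x y ZN_A by auto
    have "x \<oplus> y = mul (m + m') b \<oplus> (z \<oplus> z')" using x y zA bA by (simp add: mul_add ad_ac)
    moreover have "z \<oplus> z' \<in> ZN N" using sgD(3)[OF sZ x(2) y(2)] .
    ultimately show "x \<oplus> y \<in> J" unfolding J_def by blast
  next
    fix x assume "x \<in> J"
    then obtain m z where x: "x = mul m b \<oplus> z" "z \<in> ZN N" unfolding J_def by blast
    have zA: "z \<in> A" using x ZN_A by auto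
    have "ng x = mul (- m) b \<oplus> ng z" using x zA bA by (simp add: mul_neg ng_ad)
    moreover have "ng z \<in> ZN N" using sgD(4)[OF sZ x(2)] .
    ultimately show "ng x \<in> J" unfolding J_def by blast
  next
    fix a j assume a: "a \<in> A" and "j \<in> J"
    then obtain m z where j: "j = mul m b \<oplus> z" "z \<in> ZN N" unfolding J_def by blast
    have zA: "z \<in> A" using j ZN_A by auto
    have "st a j = mul m (st a b) \<oplus> st a z" using j zA bA a by (simp add: st_add2 st_mul2)
    moreover have "mul m (st a b) \<in> ZN N" using sg_mul[OF sZ bR[rule_format, OF a]] .
    moreover have "st a z \<in> ZN N" using subsetD[OF NZ ZN_st(2)[OF j(2) a]] .
    ultimately have "st a j \<in> ZN N" using sZ sgD by simp
    thus "st a j \<in> J" using ZJ by blast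
    have "mul m (st b a) \<in> ZN N" using b a sZ sg_mul by (simp add: L2_def)
    hence "st j a \<in> ZN N" using cg_mem[OF sZ cg_mono[OF NZ stJ[OF j a]]] by simp
    thus "st j a \<in> J" using ZJ by blast
  qed
  have inI: "y \<in> I" if "cg N y (mul q e)" for y q
  proof -
    have yA: "y \<in> A" using that by (simp add: cg_def)
    have "y = mul 0 b \<oplus> mul q e \<oplus> (y \<oplus> ng (mul q e))" using yA eA by (simp add: ad_ac)
    moreover have "y \<oplus> ng (mul q e) \<in> N" using that by (simp add: cg_def)
    ultimately show ?thesis unfolding I_def by blast
  qed
  have IJ: "I \<subseteq> J"
  proof
    fix y assume "y \<in> I"
    then obtain p q n where y: "y = mul p b \<oplus> mul q e \<oplus> n" "n \<in> N" unfolding I_def by blast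
    have nA: "n \<in> A" using y NA by auto
    have "y = mul p b \<oplus> (mul q e \<oplus> n)" using y nA eA bA by (simp add: ad_assoc)
    moreover have "mul q e \<oplus> n \<in> ZN N" using sgD(3)[OF sZ sg_mul[OF sZ eZ] subsetD[OF NZ y(2)]] .
    ultimately show "y \<in> J" unfolding J_def by blast
  qed
  have I0: "\<zero> \<in> I" using inI[of \<zero> 0] cg_refl[OF sN] by simp
  have Iadd: "\<forall>x\<in>I. \<forall>y\<in>I. x \<oplus> y \<in> I"
  proof (intro ballI)
    fix x y assume "x \<in> I" "y \<in> I"
    then obtain p q n p' q' n' where x: "x = mul p b \<oplus> mul q e \<oplus> n" "n \<in> N"
      and y: "y = mul p' b \<oplus> mul q' e \<oplus> n'" "n' \<in> N" unfolding I_def by blast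
    have nA: "n \<in> A" "n' \<in> A" using x y NA by auto
    have "x \<oplus> y = mul (p + p') b \<oplus> mul (q + q') e \<oplus> (n \<oplus> n')" using x y nA bA eA by (simp add: mul_add ad_ac)
    moreover have "n \<oplus> n' \<in> N" using sgD(3)[OF sN x(2) y(2)] .
    ultimately show "x \<oplus> y \<in> I" unfolding I_def by blast
  qed
  have Ing: "\<forall>x\<in>I. ng x \<in> I"
  proof
    fix x assume "x \<in> I"
    then obtain p q n where x: "x = mul p b \<oplus> mul q e \<oplus> n" "n \<in> N" unfolding I_def by blast
    have nA: "n \<in> A" using x NA by auto
    have "ng x = mul (- p) b \<oplus> mul (- q) e \<oplus> ng n" using x nA bA eA by (simp add: mul_neg ng_ad)
    moreover have "ng n \<in> N" using sgD(4)[OF sN x(2)] .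
    ultimately show "ng x \<in> I" unfolding I_def by blast
  qed
  have Ist: "\<forall>j\<in>J. \<forall>i\<in>I. st j i \<in> I \<and> st i j \<in> I"
  proof (intro ballI conjI)
    fix j i assume "j \<in> J" "i \<in> I"
    then obtain m z p q n where j: "j = mul m b \<oplus> z" "z \<in> ZN N" and i: "i = mul p b \<oplus> mul q e \<oplus> n" "n \<in> N"
      unfolding I_def J_def by blast
    have zA: "z \<in> A" using j ZN_A by auto
    have nA: "n \<in> A" using i NA by auto
    have jA: "j \<in> A" using j zA bA by simp
    have "st j i = mul p (st j b) \<oplus> mul q (st j e) \<oplus> st j n" using i jA bA eA nA by (simp add: st_add2 st_mul2)
    moreover have "cg N (mul p (st j b) \<oplus> mul q (st j e) \<oplus> st j n) (mul (m * p) e \<oplus> \<zero> \<oplus> \<zero>)"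
    proof (intro cg_add[OF sN])
      have "cg N (st j b) (mul m e)" using stJ[OF j bA] by (simp add: e_def)
      thus "cg N (mul p (st j b)) (mul (m * p) e)" using cg_mul[OF sN] eA by (metis mul_mul)
      have "st j e \<in> N" using ZN_st(2)[OF eZ jA] .
      thus "cg N (mul q (st j e)) \<zero>" using cg_memS[OF sN sg_mul[OF sN]] by blast
      show "cg N (st j n) \<zero>" using N jA i cg_memS[OF sN] by (simp add: idl_def)
    qed
    ultimately show "st j i \<in> I" using inI eA by simp
    let ?w = "mul q e \<oplus> n"
    have w: "?w \<in> ZN N" using sgD(3)[OF sZ sg_mul[OF sZ eZ] subsetD[OF NZ i(2)]] .
    have "i = mul p b \<oplus> ?w" using i nA bA eA by (simp add: ad_assoc)
    hence c1: "cg N (st i j) (mul p (st b j))" using stJ[OF _ w jA] by simp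
    have "st b j = mul m e \<oplus> st b z" using j bA zA by (simp add: st_add2 st_mul2 e_def)
    moreover have "st b z \<in> N" using ZN_st(2)[OF j(2) bA] .
    ultimately have "cg N (st b j) (mul m e)" using cg_addS[OF sN] eA by simp
    hence "cg N (mul p (st b j)) (mul (m * p) e)" using cg_mul[OF sN] eA by (metis mul_mul)
    thus "st i j \<in> I" using inI cg_trans[OF sN c1] by blast
  qed
  have idlI: "idl I" using T_use[OF T idlJ IJ I0 Iadd Ing Ist] .
  have "b = mul 1 b \<oplus> mul 0 e \<oplus> \<zero>" using bA by simp
  hence bI: "b \<in> I" unfolding I_def using sgD(2)[OF sN] by blast
  show ?thesis using idlI bI unfolding I_def e_def[symmetric] by (auto simp: idl_def)
qed

end

context brace_ctx begin

lemma I_mem_ZN: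
  assumes N: "idl N" and y: "y \<in> ZN N" and e: "e \<in> ZN N" and bA: "b \<in> A" and n: "n \<in> N"
    and eq: "y = mul p b \<oplus> mul q e \<oplus> n"
  shows "mul p b \<in> ZN N"
proof -
  have sZ: "sg (ZN N)" using sg_ZN[OF N] .
  have nZ: "n \<in> ZN N" using N_ZN[OF N] n by blast
  have eA: "e \<in> A" and nA: "n \<in> A" using e nZ ZN_A by auto
  have "mul p b = y \<oplus> ng (mul q e \<oplus> n)" using split3[OF _ _ nA eq] bA eA by simp
  moreover have "ng (mul q e \<oplus> n) \<in> ZN N" using sgD(4)[OF sZ sgD(3)[OF sZ sg_mul[OF sZ e] nZ]] .
  ultimately show ?thesis using sgD(3)[OF sZ y] by simp
qed

lemma RL:
  assumes T: "T_brace B" and N: "idl N" and aA: "a \<in> A"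
    and aZ: "\<forall>x\<in>A. st a x \<in> ZN N \<and> st x a \<in> ZN N"
  shows "\<forall>x\<in>A. (\<exists>r. r \<noteq> 0 \<and> mul r (st x a) \<in> N) \<and> (\<exists>r. r \<noteq> 0 \<and> mul r (st a x) \<in> N)"
proof -
  have sN: "sg N" using N idl_sg by simp
  have sZ: "sg (ZN N)" using sg_ZN[OF N] .
  have NZ: "N \<subseteq> ZN N" using N_ZN[OF N] .
  have aL: "a \<in> L2 N" using aA aZ by (simp add: L2_def)
  define c where "c = st a a"
  have cZ: "c \<in> ZN N" using aZ aA c_def by simp
  have cA: "c \<in> A" using aA c_def by simp
  have bL: "mul k a \<in> L2 N" for k using sg_mul[OF sg_L2[OF N] aL] .
  have bR: "\<forall>x\<in>A. st x (mul k a) \<in> ZN N" for k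
    using aZ aA sg_mul[OF sZ] by (simp add: st_mul2)
  have eq_e: "cg N (st (mul k a) (mul k a)) (mul (k * k) c)" for k
  proof -
    have "cg N (st (mul k a) (mul k a)) (mul k (st a (mul k a)))" using M3[OF N aL] aA by simp
    moreover have "mul k (st a (mul k a)) = mul (k * k) c" using aA by (simp add: st_mul2 mul_mul c_def)
    ultimately show ?thesis by simp
  qed
  
  obtain r where r: "r \<noteq> 0" "mul r c \<in> N"
  proof -
    let ?b = "mul 2 a"
    let ?e = "st ?b ?b"
    have "st a ?b \<in> {mul p ?b \<oplus> mul q ?e \<oplus> n | p q n. n \<in> N}"
      using RL0[OF T N bL bR] aA by blast
    then obtain p q n where pq: "st a ?b = mul p ?b \<oplus> mul q ?e \<oplus> n" "n \<in> N" by blast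
    have stab: "st a ?b = mul 2 c" using aA by (simp add: st_mul2 c_def)
    have eZ: "?e \<in> ZN N" using bL aA by (simp add: L2_def)
    have eA: "?e \<in> A" using aA by simp
    have nA: "n \<in> A" using pq sgD(1)[OF sN] by blast
    show ?thesis
    proof (cases "p = 0")
      case False
      have "st a ?b \<in> ZN N" using bR aA by blast
      hence "mul p ?b \<in> ZN N" using I_mem_ZN[OF N _ eZ _ pq(2) pq(1)] aA by simp
      hence "mul (2 * p) a \<in> ZN N" using aA by (simp add: mul_mul)
      hence "st a (mul (2 * p) a) \<in> N" using ZN_st(2) aA by blast
      hence "mul (2 * p) c \<in> N" using aA by (simp add: st_mul2 c_def)
      thus ?thesis using that[of "2 * p"] False by simp
    next
      case True
      hence "mul 2 c = mul q ?e \<oplus> n" using pq stab eA by simp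
      hence c1: "cg N (mul 2 c) (mul q ?e)" using cg_addS[OF sN _ pq(2)] eA by simp
      have "cg N (mul q ?e) (mul q (mul (2 * 2) c))" using cg_mul[OF sN eq_e[of 2]] .
      hence "cg N (mul 2 c) (mul (4 * q) c)" using cg_trans[OF sN c1] cA by (simp add: mul_mul mult.commute)
      hence "mul 2 c \<oplus> ng (mul (4 * q) c) \<in> N" by (simp add: cg_def)
      moreover have "mul 2 c \<oplus> ng (mul (4 * q) c) = mul (2 - 4 * q) c"
        using cA mul_add[of c 2 "- (4 * q)"] mul_neg[of c "4 * q"] by simp
      moreover have "(2::int) - 4 * q \<noteq> 0" by presburger
      ultimately show ?thesis using that[of "2 - 4 * q"] by simp
    qed
  qed
  define k where "k = r * r"
  have k0: "k \<noteq> 0" using r by (simp add: k_def)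
  have kc: "mul k c \<in> N" using sg_mul[OF sN r(2), of r] cA by (simp add: mul_mul k_def)
  let ?b = "mul k a"
  let ?e = "st ?b ?b"
  have bA: "?b \<in> A" using aA by simp
  have eN: "?e \<in> N"
  proof -
    have "mul (k * k) c \<in> N" using sg_mul[OF sN kc, of k] cA by (simp add: mul_mul)
    thus ?thesis using cg_mem[OF sN eq_e[of k]] by simp
  qed
  have eZ: "?e \<in> ZN N" using eN NZ by blast
  have R: "\<forall>x\<in>A. st x ?b \<in> {mul p ?b \<oplus> mul q ?e \<oplus> n | p q n. n \<in> N}
              \<and> st ?b x \<in> {mul p ?b \<oplus> mul q ?e \<oplus> n | p q n. n \<in> N}"
    using RL0[OF T N bL bR] .
  show ?thesis
  proof (intro ballI conjI)
    fix x assume x: "x \<in> A"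
    obtain p q n where pq: "st x ?b = mul p ?b \<oplus> mul q ?e \<oplus> n" "n \<in> N" using R x by blast
    have stxb: "st x ?b = mul k (st x a)" using x aA by (simp add: st_mul2)
    show "\<exists>r. r \<noteq> 0 \<and> mul r (st x a) \<in> N"
    proof (cases "p = 0")
      case False
      have "st x ?b \<in> ZN N" using bR x by blast
      hence "mul p ?b \<in> ZN N" using I_mem_ZN[OF N _ eZ bA pq(2) pq(1)] by simp
      hence "mul (k * p) a \<in> ZN N" using aA by (simp add: mul_mul)
      hence "st x (mul (k * p) a) \<in> N" using ZN_st(2) x by blast
      hence "mul (k * p) (st x a) \<in> N" using aA x by (simp add: st_mul2)
      thus ?thesis using False k0 by (intro exI[of _ "k * p"]) simp
    next
      case True
      have "mul q ?e \<oplus> n \<in> N" using sgD(3)[OF sN sg_mul[OF sN eN] pq(2)] .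
      hence "st x ?b \<in> N" using pq True bA by (simp add: ad_assoc)
      thus ?thesis using stxb k0 by (intro exI[of _ k]) simp
    qed
  next
    fix x assume x: "x \<in> A"
    obtain p q n where pq: "st ?b x = mul p ?b \<oplus> mul q ?e \<oplus> n" "n \<in> N" using R x by blast
    have cbx: "cg N (st ?b x) (mul k (st a x))" using M3[OF N aL x] .
    show "\<exists>r. r \<noteq> 0 \<and> mul r (st a x) \<in> N"
    proof (cases "p = 0")
      case False
      have "mul k (st a x) \<in> ZN N" using sg_mul[OF sZ] aZ x by blast
      hence "st ?b x \<in> ZN N" using cg_mem[OF sZ cg_mono[OF NZ cbx]] by simp
      hence "mul p ?b \<in> ZN N" using I_mem_ZN[OF N _ eZ bA pq(2) pq(1)] by simp
      hence "mul (k * p) a \<in> ZN N" using aA by (simp add: mul_mul)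
      hence "st (mul (k * p) a) x \<in> N" using ZN_st(1) x by blast
      hence "mul (k * p) (st a x) \<in> N" using cg_mem[OF sN cg_sym[OF sN M3[OF N aL x]]] by blast
      thus ?thesis using False k0 by (intro exI[of _ "k * p"]) simp
    next
      case True
      have "mul q ?e \<oplus> n \<in> N" using sgD(3)[OF sN sg_mul[OF sN eN] pq(2)] .
      hence "st ?b x \<in> N" using pq True bA by (simp add: ad_assoc)
      hence "mul k (st a x) \<in> N" using cg_mem[OF sN cg_sym[OF sN cbx]] by blast
      thus ?thesis using k0 by (intro exI[of _ k]) simp
    qed
  qed
qed

end

context brace_ctx begin

definition good where "good I \<longleftrightarrow> idl I \<and> (\<forall>i\<in>I. \<forall>x\<in>A. st i x \<in> Tor \<and> st x i \<in> Tor)"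
definition GG where "GG = {u. \<exists>I. good I \<and> u \<in> I}"

lemma good_zero: "good {\<zero>}"
  by (simp add: good_def idl_def)

lemma st_ad1': "u \<in> A \<Longrightarrow> v \<in> A \<Longrightarrow> x \<in> A \<Longrightarrow>
   st (u \<oplus> v) x = st u x \<oplus> (st u (st (v \<oplus> st (mi u) v) x) \<oplus> st (v \<oplus> st (mi u) v) x)"
  using st_ad1[of u v x] by (simp add: ad_ac)

lemma good_sum: assumes g1: "good I1" and g2: "good I2"
  shows "good {u \<oplus> v | u v. u \<in> I1 \<and> v \<in> I2}"
proof -
  let ?S = "{u \<oplus> v | u v. u \<in> I1 \<and> v \<in> I2}"
  have i1: "idl I1" and i2: "idl I2" using g1 g2 by (auto simp: good_def)
  have A1: "I1 \<subseteq> A" and A2: "I2 \<subseteq> A" using i1 i2 by (auto simp: idl_def)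
  have key: "st (u \<oplus> v) x \<in> ?S \<and> st (u \<oplus> v) x \<in> Tor" if uv: "u \<in> I1" "v \<in> I2" and x: "x \<in> A" for u v x
  proof -
    have uA: "u \<in> A" and vA: "v \<in> A" using uv A1 A2 by auto
    let ?w = "v \<oplus> st (mi u) v"
    have w: "?w \<in> I2" using i2 uv uA by (simp add: idl_def)
    have s1: "st ?w x \<in> I2" using i2 w x by (simp add: idl_def)
    have s2: "st u (st ?w x) \<in> I2" using i2 s1 uA by (simp add: idl_def)
    have s3: "st u x \<in> I1" using i1 uv x by (simp add: idl_def)
    have e: "st (u \<oplus> v) x = st u x \<oplus> (st u (st ?w x) \<oplus> st ?w x)" using st_ad1'[OF uA vA x] .
    have "st u (st ?w x) \<oplus> st ?w x \<in> I2" using i2 s1 s2 by (simp add: idl_def)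
    hence m1: "st (u \<oplus> v) x \<in> ?S" unfolding e using s3 by blast
    have t1: "st ?w x \<in> Tor" using g2 w x by (simp add: good_def)
    have t2: "st u (st ?w x) \<in> Tor" using g2 s1 uA by (simp add: good_def)
    have t3: "st u x \<in> Tor" using g1 uv x by (simp add: good_def)
    have "st (u \<oplus> v) x \<in> Tor" unfolding e using t1 t2 t3 by (simp add: tor_ad)
    with m1 show ?thesis by simp
  qed
  have "idl ?S" unfolding idl_def
  proof (intro conjI ballI)
    show "?S \<subseteq> A" using A1 A2 by auto
    have "\<zero> = \<zero> \<oplus> \<zero>" by simp
    moreover have "\<zero> \<in> I1" "\<zero> \<in> I2" using i1 i2 by (simp_all add: idl_def)
    ultimately show "\<zero> \<in> ?S" by blast
  next
    fix x y assume "x \<in> ?S" "y \<in> ?S"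
    then obtain u v u' v' where x: "x = u \<oplus> v" "u \<in> I1" "v \<in> I2" and y: "y = u' \<oplus> v'" "u' \<in> I1" "v' \<in> I2" by blast
    have "u \<in> A" "v \<in> A" "u' \<in> A" "v' \<in> A" using x y A1 A2 by auto
    hence "x \<oplus> y = (u \<oplus> u') \<oplus> (v \<oplus> v')" using x y by (simp add: ad_ac)
    moreover have "u \<oplus> u' \<in> I1" "v \<oplus> v' \<in> I2" using x y i1 i2 by (auto simp: idl_def)
    ultimately show "x \<oplus> y \<in> ?S" by blast
  next
    fix x assume "x \<in> ?S"
    then obtain u v where x: "x = u \<oplus> v" "u \<in> I1" "v \<in> I2" by blast
    have "u \<in> A" "v \<in> A" using x A1 A2 by auto
    hence "ng x = ng u \<oplus> ng v" using x by (simp add: ng_ad)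
    moreover have "ng u \<in> I1" "ng v \<in> I2" using x i1 i2 by (auto simp: idl_def)
    ultimately show "ng x \<in> ?S" by blast
  next
    fix a z assume a: "a \<in> A" and "z \<in> ?S"
    then obtain u v where z: "z = u \<oplus> v" "u \<in> I1" "v \<in> I2" by blast
    have "u \<in> A" "v \<in> A" using z A1 A2 by auto
    hence "st a z = st a u \<oplus> st a v" using z a by (simp add: st_add2)
    moreover have "st a u \<in> I1" "st a v \<in> I2" using z i1 i2 a by (auto simp: idl_def)
    ultimately show "st a z \<in> ?S" by blast
    show "st z a \<in> ?S" using key z a by blast
  qed
  moreover have "\<forall>i\<in>?S. \<forall>x\<in>A. st i x \<in> Tor \<and> st x i \<in> Tor"
  proof (intro ballI conjI)
    fix i x assume "i \<in> ?S" and x: "x \<in> A"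
    then obtain u v where i: "i = u \<oplus> v" "u \<in> I1" "v \<in> I2" by blast
    show "st i x \<in> Tor" using key i x by blast
    have "u \<in> A" "v \<in> A" using i A1 A2 by auto
    hence "st x i = st x u \<oplus> st x v" using i x by (simp add: st_add2)
    moreover have "st x u \<in> Tor" "st x v \<in> Tor" using i g1 g2 x by (auto simp: good_def)
    ultimately show "st x i \<in> Tor" by (simp add: tor_ad)
  qed
  ultimately show ?thesis by (simp add: good_def)
qed

lemma GG_I: "good I \<Longrightarrow> u \<in> I \<Longrightarrow> u \<in> GG" unfolding GG_def by blast

lemma GG_idl: "idl GG"
  unfolding idl_def
proof (intro conjI ballI)
  show "GG \<subseteq> A"
  proof
    fix x assume "x \<in> GG"
    then obtain I where "good I" "x \<in> I" unfolding GG_def by blast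
    thus "x \<in> A" unfolding good_def idl_def by blast
  qed
  show "\<zero> \<in> GG" using GG_I[OF good_zero] by simp
next
  fix x y assume "x \<in> GG" "y \<in> GG"
  then obtain I1 I2 where I: "good I1" "x \<in> I1" "good I2" "y \<in> I2" unfolding GG_def by blast
  have "x \<oplus> y \<in> {u \<oplus> v | u v. u \<in> I1 \<and> v \<in> I2}" using I by blast
  thus "x \<oplus> y \<in> GG" using GG_I[OF good_sum[OF I(1) I(3)]] by simp
next
  fix x assume "x \<in> GG"
  then obtain I where I: "good I" "x \<in> I" unfolding GG_def by blast
  hence "ng x \<in> I" unfolding good_def idl_def by blast
  thus "ng x \<in> GG" using GG_I[OF I(1)] by simp
next
  fix a z assume a: "a \<in> A" and "z \<in> GG"
  then obtain I where I: "good I" "z \<in> I" unfolding GG_def by blast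
  hence "st a z \<in> I" "st z a \<in> I" using a unfolding good_def idl_def by blast+
  thus "st a z \<in> GG" "st z a \<in> GG" using GG_I[OF I(1)] by simp_all
qed

lemma GG_tor: "u \<in> GG \<Longrightarrow> x \<in> A \<Longrightarrow> st u x \<in> Tor \<and> st x u \<in> Tor"
  unfolding GG_def good_def by blast

lemma N0_idl: "idl (GG \<inter> Tor)"
proof -
  have G: "idl GG" by (rule GG_idl)
  show ?thesis unfolding idl_def
  proof (intro conjI ballI)
    show "GG \<inter> Tor \<subseteq> A" using tor_sub by blast
    show "\<zero> \<in> GG \<inter> Tor" using G tor_zr by (simp add: idl_def)
  next
    fix x y assume "x \<in> GG \<inter> Tor" "y \<in> GG \<inter> Tor"
    thus "x \<oplus> y \<in> GG \<inter> Tor" using G tor_ad by (simp add: idl_def)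
  next
    fix x assume "x \<in> GG \<inter> Tor"
    thus "ng x \<in> GG \<inter> Tor" using G tor_ng by (simp add: idl_def)
  next
    fix a z assume a: "a \<in> A" and z: "z \<in> GG \<inter> Tor"
    have "st a z \<in> GG" "st z a \<in> GG" using G a z by (simp_all add: idl_def)
    moreover have "st a z \<in> Tor" "st z a \<in> Tor" using GG_tor a z by simp_all
    ultimately show "st a z \<in> GG \<inter> Tor" "st z a \<in> GG \<inter> Tor" by simp_all
  qed
qed

lemma step_GG:
  assumes T: "T_brace B" and aA: "a \<in> A" and h: "\<forall>x\<in>A. st a x \<in> GG \<and> st x a \<in> GG"
  shows "a \<in> GG"
proof -
  let ?N = "GG \<inter> Tor"
  have N: "idl ?N" using N0_idl .
  have sN: "sg ?N" using idl_sg[OF N] .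
  have G: "idl GG" using GG_idl .
  have sG: "sg GG" using idl_sg[OF G] .
  have inZ: "u \<in> ZN ?N" if "u \<in> GG" for u
  proof -
    have "u \<in> A" using that G by (auto simp: idl_def)
    moreover have "st u y \<in> ?N \<and> st y u \<in> ?N" if "y \<in> A" for y
      using \<open>u \<in> GG\<close> that G GG_tor by (auto simp: idl_def)
    ultimately show ?thesis by (simp add: ZN_def)
  qed
  have aZ: "\<forall>x\<in>A. st a x \<in> ZN ?N \<and> st x a \<in> ZN ?N" using h inZ by blast
  have torR: "st x a \<in> Tor \<and> st a x \<in> Tor" if x: "x \<in> A" for x
  proof -
    obtain r1 r2 where r: "r1 \<noteq> 0" "mul r1 (st x a) \<in> ?N" "r2 \<noteq> 0" "mul r2 (st a x) \<in> ?N"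
      using RL[OF T N aA aZ] x by blast
    have "mul r1 (st x a) \<in> Tor" "mul r2 (st a x) \<in> Tor" using r by auto
    thus ?thesis using tor_of_mul[OF st_closed[OF x aA] r(1)] tor_of_mul[OF st_closed[OF aA x] r(3)] by blast
  qed
  have aLN: "a \<in> L2 ?N" using aA aZ by (simp add: L2_def)
  have aLG: "a \<in> L2 GG" using aA h N_ZN[OF G] by (auto simp: L2_def)
  define Ia where "Ia = {mul m a \<oplus> g | m g. g \<in> GG}"
  have GIa: "GG \<subseteq> Ia"
  proof
    fix g assume g: "g \<in> GG"
    hence "g \<in> A" using G by (auto simp: idl_def)
    hence "g = mul 0 a \<oplus> g" by simp
    thus "g \<in> Ia" unfolding Ia_def using g by blast
  qed
  have GA: "GG \<subseteq> A" using G by (simp add: idl_def)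
  have stl: "st (mul m a \<oplus> g) x \<in> GG \<and> st (mul m a \<oplus> g) x \<in> Tor" if g: "g \<in> GG" and x: "x \<in> A" for m g x
  proof
    have gZ: "g \<in> ZN GG" using N_ZN[OF G] g by blast
    have "cg GG (st (mul m a \<oplus> g) x) (st (mul m a) x)" using M1[OF G _ gZ x] aA by simp
    moreover have "cg GG (st (mul m a) x) (mul m (st a x))" using M3[OF G aLG x] .
    moreover have "mul m (st a x) \<in> GG" using sg_mul[OF sG] h x by blast
    ultimately show "st (mul m a \<oplus> g) x \<in> GG" using cg_mem[OF sG cg_trans[OF sG]] by blast
    have gZ': "g \<in> ZN ?N" using inZ g by blast
    have "cg ?N (st (mul m a \<oplus> g) x) (st (mul m a) x)" using M1[OF N _ gZ' x] aA by simp
    moreover have "cg ?N (st (mul m a) x) (mul m (st a x))" using M3[OF N aLN x] .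
    ultimately have "cg ?N (st (mul m a \<oplus> g) x) (mul m (st a x))" by (rule cg_trans[OF sN])
    hence "cg Tor (st (mul m a \<oplus> g) x) (mul m (st a x))" by (rule cg_mono[rotated]) blast
    moreover have "mul m (st a x) \<in> Tor" using tor_mul torR x by blast
    ultimately show "st (mul m a \<oplus> g) x \<in> Tor" using cg_mem[OF sg_tor] by blast
  qed
  have str: "st x (mul m a \<oplus> g) \<in> GG \<and> st x (mul m a \<oplus> g) \<in> Tor" if g: "g \<in> GG" and x: "x \<in> A" for m g x
  proof -
    have gA: "g \<in> A" using g GA by blast
    have e: "st x (mul m a \<oplus> g) = mul m (st x a) \<oplus> st x g" using gA x aA by (simp add: st_add2 st_mul2)
    have "mul m (st x a) \<in> GG" using sg_mul[OF sG] h x by blast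
    moreover have "st x g \<in> GG" using G g x by (simp add: idl_def)
    moreover have "mul m (st x a) \<in> Tor" using tor_mul torR x by blast
    moreover have "st x g \<in> Tor" using GG_tor g x by blast
    ultimately show ?thesis unfolding e using sgD(3)[OF sG] tor_ad by blast
  qed
  have "good Ia" unfolding good_def idl_def
  proof (intro conjI ballI)
    show "Ia \<subseteq> A" unfolding Ia_def using GA aA by auto
    show "\<zero> \<in> Ia" using GIa sgD(2)[OF sG] by blast
  next
    fix x y assume "x \<in> Ia" "y \<in> Ia"
    then obtain m g m' g' where x: "x = mul m a \<oplus> g" "g \<in> GG" and y: "y = mul m' a \<oplus> g'" "g' \<in> GG"
      unfolding Ia_def by blast
    have gA: "g \<in> A" "g' \<in> A" using x y GA by auto
    have "x \<oplus> y = mul (m + m') a \<oplus> (g \<oplus> g')" using x y gA aA by (simp add: mul_add ad_ac)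
    moreover have "g \<oplus> g' \<in> GG" using sgD(3)[OF sG x(2) y(2)] .
    ultimately show "x \<oplus> y \<in> Ia" unfolding Ia_def by blast
  next
    fix x assume "x \<in> Ia"
    then obtain m g where x: "x = mul m a \<oplus> g" "g \<in> GG" unfolding Ia_def by blast
    have gA: "g \<in> A" using x GA by auto
    have "ng x = mul (- m) a \<oplus> ng g" using x gA aA by (simp add: mul_neg ng_ad)
    moreover have "ng g \<in> GG" using sgD(4)[OF sG x(2)] .
    ultimately show "ng x \<in> Ia" unfolding Ia_def by blast
  next
    fix y z assume y: "y \<in> A" and "z \<in> Ia"
    then obtain m g where z: "z = mul m a \<oplus> g" "g \<in> GG" unfolding Ia_def by blast
    show "st y z \<in> Ia" using str[OF z(2) y] z GIa by blast
    show "st z y \<in> Ia" using stl[OF z(2) y] z GIa by blast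
  next
    fix i x assume "i \<in> Ia" and x: "x \<in> A"
    then obtain m g where i: "i = mul m a \<oplus> g" "g \<in> GG" unfolding Ia_def by blast
    show "st i x \<in> Tor" using stl[OF i(2) x] i by blast
    show "st x i \<in> Tor" using str[OF i(2) x] i by blast
  qed
  moreover have "a \<in> Ia"
  proof -
    have "a = mul 1 a \<oplus> \<zero>" using aA by simp
    thus ?thesis unfolding Ia_def using sgD(2)[OF sG] by blast
  qed
  ultimately show ?thesis unfolding GG_def by blast
qed

lemma zeta_GG: assumes T: "T_brace B" shows "a \<in> zeta_inf B \<Longrightarrow> a \<in> GG"
proof (induct rule: zeta_inf.induct)
  case zero
  then show ?case using GG_idl by (simp add: idl_def)
next
  case (step a)
  have "\<forall>x\<in>A. st a x \<in> GG \<and> st x a \<in> GG" using step by blast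
  thus ?case using step_GG[OF T step(1)] by blast
qed

lemma all_tor: assumes T: "T_brace B" and H: "star_hypercentral B" and a: "a \<in> A" and x: "x \<in> A"
  shows "st a x \<in> Tor"
proof -
  have "a \<in> GG" using zeta_GG[OF T] H a by (simp add: star_hypercentral_def)
  thus ?thesis using GG_tor x by blast
qed

end

context brace_ctx begin

abbreviation cs where "cs a \<equiv> bcoset B Tor a"

lemma cs_mem: "x \<in> cs a \<longleftrightarrow> (\<exists>l\<in>Tor. x = a \<oplus> l)" by (auto simp: bcoset_def)

lemma cs_sub: assumes a: "a \<in> A" and b: "b \<in> A" and t: "a \<oplus> ng b \<in> Tor" shows "cs a \<subseteq> cs b"
proof
  fix x assume "x \<in> cs a"
  then obtain l where l: "l \<in> Tor" "x = a \<oplus> l" by (auto simp: cs_mem)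
  have lA: "l \<in> A" using l tor_sub by blast
  have "x = b \<oplus> ((a \<oplus> ng b) \<oplus> l)" using l a b lA by (simp add: ad_ac)
  moreover have "(a \<oplus> ng b) \<oplus> l \<in> Tor" using t l tor_ad by blast
  ultimately show "x \<in> cs b" by (auto simp: cs_mem)
qed

lemma cs_eq: assumes a: "a \<in> A" and b: "b \<in> A" and t: "a \<oplus> ng b \<in> Tor" shows "cs a = cs b"
proof
  show "cs a \<subseteq> cs b" using cs_sub[OF a b t] .
  have "ng (a \<oplus> ng b) \<in> Tor" using tor_ng t by blast
  hence "b \<oplus> ng a \<in> Tor" using a b by (simp add: ng_ad ad_comm)
  thus "cs b \<subseteq> cs a" using cs_sub[OF b a] by blast
qed

lemma cs_self: "a \<in> A \<Longrightarrow> a \<in> cs a"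
  using tor_zr by (auto simp: cs_mem intro!: bexI[of _ \<zero>])

lemma rep: assumes a: "a \<in> A"
  shows "(SOME x. x \<in> cs a) \<in> A \<and> (SOME x. x \<in> cs a) \<oplus> ng a \<in> Tor"
proof -
  have "(SOME x. x \<in> cs a) \<in> cs a" using someI[of "\<lambda>x. x \<in> cs a" a] cs_self[OF a] by blast
  then obtain l where l: "l \<in> Tor" "(SOME x. x \<in> cs a) = a \<oplus> l" by (auto simp: cs_mem)
  have lA: "l \<in> A" using l tor_sub by blast
  show ?thesis using l a lA by (simp add: ad_ac)
qed

lemma Qcar: "bcar (quot_brace B Tor) = cs ` A" by (simp add: quot_brace_def)
lemma Qzero: "bzero (quot_brace B Tor) = cs \<zero>" by (simp add: quot_brace_def)

lemma Qadd: assumes a: "a \<in> A" and b: "b \<in> A"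
  shows "badd (quot_brace B Tor) (cs a) (cs b) = cs (a \<oplus> b)"
proof -
  let ?x = "SOME x. x \<in> cs a" and ?y = "SOME x. x \<in> cs b"
  have x: "?x \<in> A" "?x \<oplus> ng a \<in> Tor" using rep[OF a] by auto
  have y: "?y \<in> A" "?y \<oplus> ng b \<in> Tor" using rep[OF b] by auto
  have "(?x \<oplus> ?y) \<oplus> ng (a \<oplus> b) = (?x \<oplus> ng a) \<oplus> (?y \<oplus> ng b)" using x y a b by (simp add: ad_ac ng_ad)
  hence "(?x \<oplus> ?y) \<oplus> ng (a \<oplus> b) \<in> Tor" using x y tor_ad by simp
  hence "cs (?x \<oplus> ?y) = cs (a \<oplus> b)" using x y a b by (intro cs_eq) auto
  thus ?thesis by (simp add: quot_brace_def)
qed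

lemma Qmul: assumes AT: "\<forall>u\<in>A. \<forall>v\<in>A. st u v \<in> Tor" and a: "a \<in> A" and b: "b \<in> A"
  shows "bmul (quot_brace B Tor) (cs a) (cs b) = cs (a \<oplus> b)"
proof -
  let ?x = "SOME x. x \<in> cs a" and ?y = "SOME x. x \<in> cs b"
  have x: "?x \<in> A" "?x \<oplus> ng a \<in> Tor" using rep[OF a] by auto
  have y: "?y \<in> A" "?y \<oplus> ng b \<in> Tor" using rep[OF b] by auto
  have "(?x \<odot> ?y) \<oplus> ng (a \<oplus> b) = (?x \<oplus> ng a) \<oplus> (?y \<oplus> ng b) \<oplus> st ?x ?y" using x y a b by (simp add: mu_st ad_ac ng_ad)
  moreover have "st ?x ?y \<in> Tor" using AT x y by blast
  ultimately have "(?x \<odot> ?y) \<oplus> ng (a \<oplus> b) \<in> Tor" using x y tor_ad by simp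
  hence "cs (?x \<odot> ?y) = cs (a \<oplus> b)" using x y a b by (intro cs_eq) auto
  thus ?thesis by (simp add: quot_brace_def)
qed

lemma cs_zero_iff: "c \<in> A \<Longrightarrow> cs c = cs \<zero> \<Longrightarrow> c \<in> Tor"
proof -
  assume c: "c \<in> A" "cs c = cs \<zero>"
  hence "c \<in> cs \<zero>" using cs_self by blast
  then obtain l where "l \<in> Tor" "c = \<zero> \<oplus> l" by (auto simp: cs_mem)
  thus ?thesis using tor_sub by auto
qed

lemma Qneg: assumes a: "a \<in> A"
  shows "bneg (quot_brace B Tor) (cs a) = cs (ng a)"
proof -
  let ?Q = "quot_brace B Tor"
  have "inv\<^bsub>addgrp ?Q\<^esub> (cs a) = cs (ng a)"
    unfolding m_inv_def
  proof (rule the_equality)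
    show "cs (ng a) \<in> carrier (addgrp ?Q) \<and> cs a \<otimes>\<^bsub>addgrp ?Q\<^esub> cs (ng a) = \<one>\<^bsub>addgrp ?Q\<^esub>
        \<and> cs (ng a) \<otimes>\<^bsub>addgrp ?Q\<^esub> cs a = \<one>\<^bsub>addgrp ?Q\<^esub>"
      using a by (simp add: Qcar Qzero Qadd)
  next
    fix y assume y: "y \<in> carrier (addgrp ?Q) \<and> cs a \<otimes>\<^bsub>addgrp ?Q\<^esub> y = \<one>\<^bsub>addgrp ?Q\<^esub>
        \<and> y \<otimes>\<^bsub>addgrp ?Q\<^esub> cs a = \<one>\<^bsub>addgrp ?Q\<^esub>"
    then obtain b where b: "b \<in> A" "y = cs b" by (auto simp: Qcar)
    hence "cs (a \<oplus> b) = cs \<zero>" using y a by (simp add: Qadd Qzero)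
    hence "a \<oplus> b \<in> Tor" using cs_zero_iff a b by simp
    hence "b \<oplus> ng (ng a) \<in> Tor" using a b by (simp add: ad_comm)
    thus "y = cs (ng a)" using b(2) cs_eq[OF b(1) ng_closed[OF a]] by simp
  qed
  thus ?thesis by (simp add: bneg_def)
qed

lemma quot_abelian: assumes AT: "\<forall>u\<in>A. \<forall>v\<in>A. st u v \<in> Tor"
  shows "abelian_brace (quot_brace B Tor)"
  unfolding abelian_brace_def
proof (intro ballI)
  fix X Y assume "X \<in> bcar (quot_brace B Tor)" "Y \<in> bcar (quot_brace B Tor)"
  then obtain x y where x: "x \<in> A" "X = cs x" and y: "y \<in> A" "Y = cs y" by (auto simp: Qcar)
  have "bstar (quot_brace B Tor) X Y = cs (x \<oplus> y \<oplus> ng x \<oplus> ng y)"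
    using x y by (simp add: bstar_def bsub_def Qmul[OF AT] Qneg Qadd)
  also have "x \<oplus> y \<oplus> ng x \<oplus> ng y = \<zero>" using x y by (simp add: ad_ac)
  finally show "bstar (quot_brace B Tor) X Y = bzero (quot_brace B Tor)" by (simp add: Qzero)
qed

end

theorem corollary3:
  fixes B :: "'a brace_struct"
  assumes "brace B"
    and "star_hypercentral B"
    and "T_brace B"
    and "\<not> add_periodic B"
  shows "brace_ideal (torsion B) B \<and> abelian_brace (quot_brace B (torsion B))"
proof -
  interpret brace_ctx B by (unfold_locales) (rule assms(1))
  have AT: "\<forall>u\<in>bcar B. \<forall>v\<in>bcar B. bstar B u v \<in> torsion B" using all_tor[OF assms(3) assms(2)] by blast
  have "idl (torsion B)" unfolding idl_def
  proof (intro conjI ballI)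
    show "torsion B \<subseteq> bcar B" by (rule tor_sub)
    show "bzero B \<in> torsion B" by (rule tor_zr)
  next
    fix x y assume "x \<in> torsion B" "y \<in> torsion B"
    thus "badd B x y \<in> torsion B" by (rule tor_ad)
  next
    fix x assume "x \<in> torsion B"
    thus "bneg B x \<in> torsion B" by (rule tor_ng)
  next
    fix a z assume "a \<in> bcar B" "z \<in> torsion B"
    moreover hence "z \<in> bcar B" using tor_sub by blast
    ultimately show "bstar B a z \<in> torsion B" "bstar B z a \<in> torsion B" using AT by blast+
  qed
  hence "brace_ideal (torsion B) B" using idl_brace_ideal by blast
  thus ?thesis using quot_abelian[OF AT] by simp
qed

end
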